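(* If $\gamma=-\phi$ (i.e. $\gamma[b]=-\phi[b]1_{\mathcal B}$ for all $b$), then for $u_1,\dots,u_n\in\mathcal B$, $B_n[X(u_1),\dots,X(u_n)]=\langle a^-(u_1)a^0(u_2)\cdots a^0(u_{n-1})a^+(u_n)\Omega,\Omega\rangle_{\gamma,\phi}$.
   Context: Let $\mathcal B$ be a unital $*$-algebra with star-linear maps $\phi:\mathcal B\to\mathbb C$, $\gamma:\mathcal B\to\mathcal B$, $\Lambda:\mathcal B\otimes_{alg}\mathcal B\to\mathcal B$, where $\phi$ is positive and faithful and $\gamma+\phi$ is completely positive, with $(\gamma+\phi)[b]:=\gamma[b]+\phi[b]1_{\mathcal B}$. Assume $\phi[v^*\Lambda(b\otimes u)]=\phi[\Lambda(b^*\otimes v)^*u]$ and $\gamma[v^*\Lambda(b\otimes u)]=\gamma[\Lambda(b^*\otimes v)^*u]$ for all $b,u,v$. On $\mathcal F_{alg}(\mathcal B)=\mathbb C\Omega\oplus\bigoplus_{n\ge1}\mathcal B^{\otimes n}$ use the form $\langle\Omega,\Omega\rangle_{\gamma,\phi}=1$, $\langle u_1\otimes\cdots\otimes u_n,v_1\otimes\cdots\otimes v_k\rangle_{\gamma,\phi}=\delta_{n=k}\phi[v_n^*(\gamma+\phi)[v_{n-1}^*\cdots(\gamma+\phi)[v_1^*u_1]\cdots u_{n-1}]u_n]$. For $b\in\mathcal B$: $a^+(b)\Omega=b$, $a^+(b)(u_1\otimes\cdots\otimes u_n)=b\otimes u_1\otimes\cdots\otimes u_n$; $a^-(b)\Omega=0$,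 $a^-(b)u_1=\phi[bu_1]\Omega$, $a^-(b)(u_1\otimes\cdots\otimes u_n)=(\gamma+\phi)[bu_1]u_2\otimes\cdots\otimes u_n$ ($n\ge2$); $a^0(b)\Omega=0$, $a^0(b)(u_1\otimes\cdots\otimes u_n)=\Lambda(b\otimes u_1)\otimes u_2\otimes\cdots\otimes u_n$; $X(b)=a^+(b)+a^-(b)+a^0(b)$. Boolean cumulants $B_k$ with respect to $\psi(A)=\langle A\Omega,\Omega\rangle_{\gamma,\phi}$ are defined by $\psi[Y_1\cdots Y_n]=\sum_{\pi\in\mathrm{Int}(n)}\prod_{V\in\pi}B_{|V|}[Y_{V(1)},\dots,Y_{V(|V|)}]$, $\mathrm{Int}(n)$ the interval partitions of $\{1,\dots,n\}$. *)

theory Defs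
  imports Complex_Main
begin

definition complex_star_algebra :: "(complex \<Rightarrow> 'b::ring_1 \<Rightarrow> 'b) \<Rightarrow> ('b \<Rightarrow> 'b) \<Rightarrow> bool" where
  "complex_star_algebra sc st \<longleftrightarrow>
     (\<forall>c x y. sc c (x + y) = sc c x + sc c y) \<and>
     (\<forall>c d x. sc (c + d) x = sc c x + sc d x) \<and>
     (\<forall>c d x. sc (c * d) x = sc c (sc d x)) \<and>
     (\<forall>x. sc 1 x = x) \<and>
     (\<forall>c x y. sc c (x * y) = sc c x * y \<and> sc c (x * y) = x * sc c y) \<and>
     (\<forall>x y. st (x + y) = st x + st y) \<and>
     (\<forall>c x. st (sc c x) = sc (cnj c) (st x)) \<and>
     (\<forall>x y. st (x * y) = st y * st x) \<and>
     (\<forall>x. st (st x) = x)"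

text \<open>Linear functionals, linear maps and bilinear maps (the latter represent linear
maps on the algebraic tensor product B \<otimes> B, by its universal property).\<close>

definition clinear_functional :: "(complex \<Rightarrow> 'b::ring_1 \<Rightarrow> 'b) \<Rightarrow> ('b \<Rightarrow> complex) \<Rightarrow> bool" where
  "clinear_functional sc f \<longleftrightarrow> (\<forall>x y. f (x + y) = f x + f y) \<and> (\<forall>c x. f (sc c x) = c * f x)"

definition clinear_map :: "(complex \<Rightarrow> 'b::ring_1 \<Rightarrow> 'b) \<Rightarrow> ('b \<Rightarrow> 'b) \<Rightarrow> bool" where
  "clinear_map sc f \<longleftrightarrow> (\<forall>x y. f (x + y) = f x + f y) \<and> (\<forall>c x. f (sc c x) = sc c (f x))"

definition cbilinear_map :: "(complex \<Rightarrow> 'b::ring_1 \<Rightarrow> 'b) \<Rightarrow> ('b \<Rightarrow> 'b \<Rightarrow> 'b) \<Rightarrow> bool" where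
  "cbilinear_map sc L \<longleftrightarrow> (\<forall>x. clinear_map sc (L x)) \<and> (\<forall>y. clinear_map sc (\<lambda>x. L x y))"

definition star_functional :: "('b \<Rightarrow> 'b) \<Rightarrow> ('b \<Rightarrow> complex) \<Rightarrow> bool" where
  "star_functional st f \<longleftrightarrow> (\<forall>x. f (st x) = cnj (f x))"

definition star_map :: "('b \<Rightarrow> 'b) \<Rightarrow> ('b \<Rightarrow> 'b) \<Rightarrow> bool" where
  "star_map st f \<longleftrightarrow> (\<forall>x. f (st x) = st (f x))"

definition star_bimap :: "('b \<Rightarrow> 'b) \<Rightarrow> ('b \<Rightarrow> 'b \<Rightarrow> 'b) \<Rightarrow> bool" where
  "star_bimap st L \<longleftrightarrow> (\<forall>x y. L (st x) (st y) = st (L x y))"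

definition positive_functional :: "('b::ring_1 \<Rightarrow> 'b) \<Rightarrow> ('b \<Rightarrow> complex) \<Rightarrow> bool" where
  "positive_functional st f \<longleftrightarrow> (\<forall>b. Im (f (st b * b)) = 0 \<and> Re (f (st b * b)) \<ge> 0)"

definition faithful_functional :: "('b::ring_1 \<Rightarrow> 'b) \<Rightarrow> ('b \<Rightarrow> complex) \<Rightarrow> bool" where
  "faithful_functional st f \<longleftrightarrow> (\<forall>b. f (st b * b) = 0 \<longrightarrow> b = 0)"

definition pos_cone :: "('b::ring_1 \<Rightarrow> 'b) \<Rightarrow> 'b set" where
  "pos_cone st = {sum_list (map (\<lambda>x. st x * x) xs) | xs. True}"

definition completely_positive :: "('b::ring_1 \<Rightarrow> 'b) \<Rightarrow> ('b \<Rightarrow> 'b) \<Rightarrow> bool" where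
  "completely_positive st T \<longleftrightarrow>
     (\<forall>n::nat. \<forall>a b :: nat \<Rightarrow> 'b.
        (\<Sum>i<n. \<Sum>j<n. st (a i) * T (st (b i) * b j) * a j) \<in> pos_cone st)"

definition gpp :: "(complex \<Rightarrow> 'b::ring_1 \<Rightarrow> 'b) \<Rightarrow> ('b \<Rightarrow> complex) \<Rightarrow> ('b \<Rightarrow> 'b) \<Rightarrow> 'b \<Rightarrow> 'b" where
  "gpp sc phi gamma b = gamma b + sc (phi b) 1"

text \<open>An element of F_alg(B) is represented by a formal finite linear combination of
elementary tensors: a list of pairs (coefficient, word), where the empty word []
stands for the vacuum Omega and the word [u1,...,un] for u1 \<otimes> ... \<otimes> un.\<close>

type_synonym 'b fvec = "(complex \<times> 'b list) list"

definition vac :: "'b fvec" where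
  "vac = [(1, [])]"

definition lift_op :: "('b list \<Rightarrow> 'b fvec) \<Rightarrow> 'b fvec \<Rightarrow> 'b fvec" where
  "lift_op f v = concat (map (\<lambda>(c, w). map (\<lambda>(d, w'). (c * d, w')) (f w)) v)"

definition aplus :: "'b \<Rightarrow> 'b fvec \<Rightarrow> 'b fvec" where
  "aplus b = lift_op (\<lambda>w. [(1, b # w)])"

fun aminus_el :: "(complex \<Rightarrow> 'b::ring_1 \<Rightarrow> 'b) \<Rightarrow> ('b \<Rightarrow> complex) \<Rightarrow> ('b \<Rightarrow> 'b) \<Rightarrow> 'b \<Rightarrow> 'b list \<Rightarrow> 'b fvec" where
  "aminus_el sc phi gamma b [] = []"
| "aminus_el sc phi gamma b [u1] = [(phi (b * u1), [])]"
| "aminus_el sc phi gamma b (u1 # u2 # us) = [(1, gpp sc phi gamma (b * u1) * u2 # us)]"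

definition aminus :: "(complex \<Rightarrow> 'b::ring_1 \<Rightarrow> 'b) \<Rightarrow> ('b \<Rightarrow> complex) \<Rightarrow> ('b \<Rightarrow> 'b) \<Rightarrow> 'b \<Rightarrow> 'b fvec \<Rightarrow> 'b fvec" where
  "aminus sc phi gamma b = lift_op (aminus_el sc phi gamma b)"

fun azero_el :: "('b \<Rightarrow> 'b \<Rightarrow> 'b) \<Rightarrow> 'b \<Rightarrow> 'b list \<Rightarrow> 'b fvec" where
  "azero_el L b [] = []"
| "azero_el L b (u1 # us) = [(1, L b u1 # us)]"

definition azero :: "('b \<Rightarrow> 'b \<Rightarrow> 'b) \<Rightarrow> 'b \<Rightarrow> 'b fvec \<Rightarrow> 'b fvec" where
  "azero L b = lift_op (azero_el L b)"

definition Xop :: "(complex \<Rightarrow> 'b::ring_1 \<Rightarrow> 'b) \<Rightarrow> ('b \<Rightarrow> complex) \<Rightarrow> ('b \<Rightarrow> 'b) \<Rightarrow> ('b \<Rightarrow> 'b \<Rightarrow> 'b)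
     \<Rightarrow> 'b \<Rightarrow> 'b fvec \<Rightarrow> 'b fvec" where
  "Xop sc phi gamma L b v = aplus b v @ aminus sc phi gamma b v @ azero L b v"

text \<open>The form <.,.>_{gamma,phi}: on elementary tensors
<u1..un, v1..vn> = phi[vn* T[v(n-1)* ... T[v1* u1] ... u(n-1)] un], T = gamma + phi;
extended sesquilinearly (linear in the first, conjugate linear in the second slot).\<close>

fun ip_chain :: "('b::ring_1 \<Rightarrow> 'b) \<Rightarrow> ('b \<Rightarrow> 'b) \<Rightarrow> 'b list \<Rightarrow> 'b list \<Rightarrow> 'b \<Rightarrow> 'b" where
  "ip_chain st T (u # us) (v # vs) g = ip_chain st T us vs (st v * T g * u)"
| "ip_chain st T _ _ g = g"

fun ip_elem :: "(complex \<Rightarrow> 'b::ring_1 \<Rightarrow> 'b) \<Rightarrow> ('b \<Rightarrow> 'b) \<Rightarrow> ('b \<Rightarrow> complex) \<Rightarrow> ('b \<Rightarrow> 'b)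
     \<Rightarrow> 'b list \<Rightarrow> 'b list \<Rightarrow> complex" where
  "ip_elem sc st phi gamma [] [] = 1"
| "ip_elem sc st phi gamma (u # us) (v # vs) =
     (if length us = length vs
      then phi (ip_chain st (gpp sc phi gamma) us vs (st v * u)) else 0)"
| "ip_elem sc st phi gamma _ _ = 0"

definition fock_ip :: "(complex \<Rightarrow> 'b::ring_1 \<Rightarrow> 'b) \<Rightarrow> ('b \<Rightarrow> 'b) \<Rightarrow> ('b \<Rightarrow> complex) \<Rightarrow> ('b \<Rightarrow> 'b)
     \<Rightarrow> 'b fvec \<Rightarrow> 'b fvec \<Rightarrow> complex" where
  "fock_ip sc st phi gamma v w =
     sum_list (map (\<lambda>(c, x). sum_list (map (\<lambda>(d, y). c * cnj d * ip_elem sc st phi gamma x y) w)) v)"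

definition vac_state :: "(complex \<Rightarrow> 'b::ring_1 \<Rightarrow> 'b) \<Rightarrow> ('b \<Rightarrow> 'b) \<Rightarrow> ('b \<Rightarrow> complex) \<Rightarrow> ('b \<Rightarrow> 'b)
     \<Rightarrow> ('b fvec \<Rightarrow> 'b fvec) \<Rightarrow> complex" where
  "vac_state sc st phi gamma A = fock_ip sc st phi gamma (A vac) vac"

text \<open>Interval partitions of {1..n}, encoded by the sequence of their block sizes
(compositions of n); chunks cuts a list into consecutive blocks.\<close>

definition interval_partitions :: "nat \<Rightarrow> nat list set" where
  "interval_partitions n = {ks. (\<forall>k\<in>set ks. 0 < k) \<and> sum_list ks = n}"

fun chunks :: "nat list \<Rightarrow> 'a list \<Rightarrow> 'a list list" where
  "chunks [] xs = []"
| "chunks (k # ks) xs = take k xs # chunks ks (drop k xs)"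

definition op_prod :: "('a \<Rightarrow> 'a) list \<Rightarrow> 'a \<Rightarrow> 'a" where
  "op_prod Ys = foldr (\<circ>) Ys id"

definition boolean_cumulants :: "((('a \<Rightarrow> 'a)) \<Rightarrow> complex) \<Rightarrow> (('a \<Rightarrow> 'a) list \<Rightarrow> complex) \<Rightarrow> bool" where
  "boolean_cumulants psi Bc \<longleftrightarrow>
     (\<forall>Ys. Ys \<noteq> [] \<longrightarrow>
        psi (op_prod Ys) = (\<Sum>ks\<in>interval_partitions (length Ys). prod_list (map Bc (chunks ks Ys))))"

end

theory Submission
  imports Defs
begin


fun V0 :: "'b fvec \<Rightarrow> complex" where
  "V0 [] = 0"
| "V0 ((c, w) # v) = (if w = [] then c else 0) + V0 v"

fun V1 :: "(complex \<Rightarrow> 'b::ring_1 \<Rightarrow> 'b) \<Rightarrow> 'b fvec \<Rightarrow> 'b" where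
  "V1 sc [] = 0"
| "V1 sc ((c, w) # v) = (case w of [x] \<Rightarrow> sc c x | _ \<Rightarrow> 0) + V1 sc v"

lemma V0_append[simp]: "V0 (v @ w) = V0 v + V0 w"
  by (induction v rule: V0.induct) auto

lemma V1_append[simp]: "V1 sc (v @ w) = V1 sc v + V1 sc w"
  by (induction v rule: V0.induct) (auto simp: add.assoc)

lemma lift_op_Nil[simp]: "lift_op f [] = []"
  by (simp add: lift_op_def)

lemma lift_op_Cons[simp]: "lift_op f ((c,w) # v) = map (\<lambda>(d, w'). (c * d, w')) (f w) @ lift_op f v"
  by (simp add: lift_op_def)

lemma fock_ip_vac: "fock_ip sc st phi gamma v vac = V0 v"
proof (induction v rule: V0.induct)
  case 1 then show ?case by (simp add: fock_ip_def)
next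
  case (2 c w v)
  then show ?case by (cases w) (auto simp: fock_ip_def vac_def)
qed

locale cor_setup =
  fixes sc :: "complex \<Rightarrow> 'b::ring_1 \<Rightarrow> 'b" and phi :: "'b \<Rightarrow> complex"
    and gamma :: "'b \<Rightarrow> 'b" and L :: "'b \<Rightarrow> 'b \<Rightarrow> 'b"
  assumes alg_sc: "\<And>c x y. sc c (x + y) = sc c x + sc c y"
    and sc_dist: "\<And>c d x. sc (c + d) x = sc c x + sc d x"
    and sc_mul: "\<And>c d x. sc (c * d) x = sc c (sc d x)"
    and sc_one: "\<And>x. sc 1 x = x"
    and sc_r: "\<And>c x y. sc c (x * y) = x * sc c y"
    and phi_add: "\<And>x y. phi (x + y) = phi x + phi y"
    and phi_sc: "\<And>c x. phi (sc c x) = c * phi x"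
    and L_add: "\<And>b x y. L b (x + y) = L b x + L b y"
    and L_sc: "\<And>b c x. L b (sc c x) = sc c (L b x)"
    and gamma_eq: "\<And>b. gamma b = sc (- phi b) 1"
begin

lemma sc_zero[simp]: "sc c 0 = 0"
  using alg_sc[of c 0 0] by simp

lemma sc_zero2[simp]: "sc 0 x = 0"
  using sc_dist[of 0 0 x] by simp

lemma phi_zero[simp]: "phi 0 = 0"
  using phi_add[of 0 0] by simp

lemma L_zero[simp]: "L b 0 = 0"
  using L_add[of b 0 0] by simp

lemma gpp_zero[simp]: "gpp sc phi gamma b = 0"
  using sc_dist[of "- phi b" "phi b" 1] by (simp add: gpp_def gamma_eq)

lemma V0_map[simp]: "V0 (map (\<lambda>(d, w'). (c * d, w')) v) = c * V0 v"
  by (induction v rule: V0.induct) (auto simp: algebra_simps)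

lemma V1_map[simp]: "V1 sc (map (\<lambda>(d, w'). (c * d, w')) v) = sc c (V1 sc v)"
  by (induction v rule: V0.induct) (auto simp: alg_sc sc_mul split: list.split)

lemma V0_X: "V0 (Xop sc phi gamma L u v) = phi (u * V1 sc v)"
proof (induction v rule: V0.induct)
  case 1 then show ?case by (simp add: Xop_def aplus_def aminus_def azero_def)
next
  case (2 c w v)
  have e: "V0 (Xop sc phi gamma L u v) = V0 (aplus u v) + V0 (aminus sc phi gamma u v) + V0 (azero L u v)"
    by (simp add: Xop_def)
  consider "w = []" | x where "w = [x]" | x y r where "w = x # y # r" by (metis list.exhaust)
  then show ?case
  proof cases
    case 1 then show ?thesis using 2 e
      by (simp add: Xop_def aplus_def aminus_def azero_def distrib_left phi_add)
  next
    case 2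
    then show ?thesis using "2.IH" e
      by (simp add: Xop_def aplus_def aminus_def azero_def distrib_left phi_add sc_r[symmetric] phi_sc)
  next
    case 3
    then show ?thesis using "2.IH" e
      by (simp add: Xop_def aplus_def aminus_def azero_def distrib_left phi_add)
  qed
qed

lemma V1_X: "V1 sc (Xop sc phi gamma L u v) = sc (V0 v) u + L u (V1 sc v)"
proof (induction v rule: V0.induct)
  case 1 then show ?case by (simp add: Xop_def aplus_def aminus_def azero_def)
next
  case (2 c w v)
  have e: "V1 sc (Xop sc phi gamma L u v) = V1 sc (aplus u v) + V1 sc (aminus sc phi gamma u v) + V1 sc (azero L u v)"
    by (simp add: Xop_def)
  consider "w = []" | x where "w = [x]" | x y r where "w = x # y # r" by (metis list.exhaust)
  then show ?case
  proof cases
    case 1 then show ?thesis using 2 e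
      by (simp add: Xop_def aplus_def aminus_def azero_def sc_dist L_add algebra_simps)
  next
    case 2
    then show ?thesis using "2.IH" e
      by (simp add: Xop_def aplus_def aminus_def azero_def L_add L_sc algebra_simps)
  next
    case 3
    then show ?thesis using "2.IH" e
      by (cases r) (simp_all add: Xop_def aplus_def aminus_def azero_def L_add algebra_simps)
  qed
qed


fun Am :: "'b list \<Rightarrow> complex" and Bv :: "'b list \<Rightarrow> 'b" where
  "Am [] = 1"
| "Am (u # us) = phi (u * Bv us)"
| "Bv [] = 0"
| "Bv (u # us) = sc (Am us) u + L u (Bv us)"

lemma op_prod_Cons[simp]: "op_prod (f # fs) = f \<circ> op_prod fs"
  by (simp add: op_prod_def)

lemma op_prod_Nil[simp]: "op_prod [] = id"
  by (simp add: op_prod_def)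

lemma state_AB: "V0 (op_prod (map (Xop sc phi gamma L) us) vac) = Am us \<and>
   V1 sc (op_prod (map (Xop sc phi gamma L) us) vac) = Bv us"
  by (induction us) (auto simp: vac_def V0_X V1_X)

fun Lc :: "'b list \<Rightarrow> 'b" where
  "Lc [] = 0"
| "Lc [x] = x"
| "Lc (x # y # r) = L x (Lc (y # r))"

fun Cp :: "'b list \<Rightarrow> complex" where
  "Cp (u # v # r) = phi (u * Lc (v # r))"
| "Cp _ = 0"

lemma L_sum: "L u (\<Sum>k<(n::nat). f k) = (\<Sum>k<n. L u (f k))"
  by (induction n) (auto simp: L_add)

lemma phi_sum: "phi (\<Sum>k<(n::nat). f k) = (\<Sum>k<n. phi (f k))"
  by (induction n) (auto simp: phi_add)

lemma Bv_sum: "Bv us = (\<Sum>k<length us. sc (Am (drop (Suc k) us)) (Lc (take (Suc k) us)))"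
proof (induction us)
  case Nil then show ?case by simp
next
  case (Cons u us)
  have "(\<Sum>k<length (u # us). sc (Am (drop (Suc k) (u # us))) (Lc (take (Suc k) (u # us))))
      = sc (Am us) u + (\<Sum>k<length us. sc (Am (drop (Suc k) us)) (Lc (u # take (Suc k) us)))"
    by (simp add: sum.lessThan_Suc_shift del: sum.lessThan_Suc)
  also have "(\<Sum>k<length us. sc (Am (drop (Suc k) us)) (Lc (u # take (Suc k) us)))
      = (\<Sum>k<length us. L u (sc (Am (drop (Suc k) us)) (Lc (take (Suc k) us))))"
  proof (rule sum.cong)
    fix k assume "k \<in> {..<length us}"
    then obtain y r where "take (Suc k) us = y # r"
      by (cases us) auto
    then show "sc (Am (drop (Suc k) us)) (Lc (u # take (Suc k) us)) = L u (sc (Am (drop (Suc k) us)) (Lc (take (Suc k) us)))"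
      by (simp add: L_sc)
  qed simp
  finally show ?case using Cons by (simp add: L_sum)
qed

lemma Am_rec: assumes "us \<noteq> []" shows "Am us = (\<Sum>k<length us. Cp (take (Suc k) us) * Am (drop (Suc k) us))"
proof (cases us)
  case Nil then show ?thesis using assms by simp
next
  case (Cons u r)
  have "(\<Sum>k<length us. Cp (take (Suc k) us) * Am (drop (Suc k) us))
     = (\<Sum>k<length r. Cp (u # take (Suc k) r) * Am (drop (Suc k) r))"
    using Cons by (simp add: sum.lessThan_Suc_shift del: sum.lessThan_Suc)
  also have "\<dots> = (\<Sum>k<length r. phi (u * sc (Am (drop (Suc k) r)) (Lc (take (Suc k) r))))"
  proof (rule sum.cong)
    fix k assume "k \<in> {..<length r}"
    then obtain y z where "take (Suc k) r = y # z"
      by (cases r) auto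
    then show "Cp (u # take (Suc k) r) * Am (drop (Suc k) r) = phi (u * sc (Am (drop (Suc k) r)) (Lc (take (Suc k) r)))"
      by (simp add: sc_r[symmetric] phi_sc)
  qed simp
  finally show ?thesis using Cons by (simp add: Bv_sum sum_distrib_left phi_sum)
qed

end


lemma IP_0: "interval_partitions 0 = {[]}"
  apply (auto simp: interval_partitions_def)
  apply (case_tac x; auto)
  done

lemma IP_Suc: "interval_partitions (Suc m) = (\<Union>k<Suc m. Cons (Suc k) ` interval_partitions (m - k))"
proof (intro equalityI subsetI)
  fix ks assume "ks \<in> interval_partitions (Suc m)"
  then have h: "\<forall>k\<in>set ks. 0 < k" "sum_list ks = Suc m" by (auto simp: interval_partitions_def)
  then obtain j r where ks: "ks = j # r" by (cases ks) auto
  with h obtain k where j: "j = Suc k" by (cases j) auto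
  with h ks have "k < Suc m" "r \<in> interval_partitions (m - k)" by (auto simp: interval_partitions_def)
  then show "ks \<in> (\<Union>k<Suc m. Cons (Suc k) ` interval_partitions (m - k))" using ks j by blast
next
  fix ks assume "ks \<in> (\<Union>k<Suc m. Cons (Suc k) ` interval_partitions (m - k))"
  then show "ks \<in> interval_partitions (Suc m)" by (auto simp: interval_partitions_def)
qed

lemma finite_IP: "finite (interval_partitions n)"
proof (induction n rule: less_induct)
  case (less n)
  show ?case
  proof (cases n)
    case 0 then show ?thesis by (simp add: IP_0)
  next
    case (Suc m) then show ?thesis using less by (simp add: IP_Suc del: lessThan_Suc)
  qed
qed

lemma sum_IP: "(\<Sum>ks\<in>interval_partitions (Suc m). g ks) =
   (\<Sum>k<Suc m. \<Sum>ks\<in>interval_partitions (m - k). g (Suc k # ks))"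
proof -
  have "(\<Sum>ks\<in>interval_partitions (Suc m). g ks) =
     (\<Sum>k<Suc m. \<Sum>ks\<in>Cons (Suc k) ` interval_partitions (m - k). g ks)"
    unfolding IP_Suc
    by (rule sum.UNION_disjoint) (auto simp: finite_IP)
  also have "\<dots> = (\<Sum>k<Suc m. \<Sum>ks\<in>interval_partitions (m - k). g (Suc k # ks))"
    by (rule sum.cong) (auto simp: sum.reindex)
  finally show ?thesis .
qed

lemma chunks_map: "chunks ks (map f xs) = map (map f) (chunks ks xs)"
  by (induction ks arbitrary: xs) (auto simp: take_map drop_map)

lemma chunks_len: "sum_list ks = length xs \<Longrightarrow> map length (chunks ks xs) = ks"
  by (induction ks arbitrary: xs) auto

lemma IP_lt:
  assumes "ks \<in> interval_partitions n" "ks \<noteq> [n]" "k \<in> set ks"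
  shows "0 < k \<and> k < n"
proof -
  have h: "\<forall>k\<in>set ks. 0 < k" "sum_list ks = n" using assms(1) by (auto simp: interval_partitions_def)
  have "k \<le> n" using member_le_sum_list[OF assms(3)] h by simp
  moreover have "k \<noteq> n"
  proof
    assume kn: "k = n"
    have "sum_list ks = k + sum_list (remove1 k ks)"
      using sum_list_map_remove1[OF assms(3), of id] by simp
    then have "sum_list (remove1 k ks) = 0" using h kn by simp
    moreover have "\<forall>x\<in>set (remove1 k ks). 0 < x" using h(1) by (meson notin_set_remove1)
    ultimately have "remove1 k ks = []" by (cases "remove1 k ks") auto
    then have "ks = [k]" using assms(3)
      by (cases ks) (auto split: if_splits)
    then show False using assms(2) kn by simp
  qed
  ultimately show ?thesis using h assms(3) by auto
qed

context cor_setup begin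

lemma moments: "Am us = (\<Sum>ks\<in>interval_partitions (length us). prod_list (map Cp (chunks ks us)))"
proof (induction "length us" arbitrary: us rule: less_induct)
  case less
  show ?case
  proof (cases us)
    case Nil then show ?thesis by (simp add: IP_0)
  next
    case (Cons u r)
    let ?m = "length r"
    have "(\<Sum>ks\<in>interval_partitions (length us). prod_list (map Cp (chunks ks us)))
      = (\<Sum>k<Suc ?m. \<Sum>ks\<in>interval_partitions (?m - k). Cp (take (Suc k) us) * prod_list (map Cp (chunks ks (drop (Suc k) us))))"
      using Cons by (simp add: sum_IP del: lessThan_Suc)
    also have "\<dots> = (\<Sum>k<Suc ?m. Cp (take (Suc k) us) * Am (drop (Suc k) us))"
    proof (rule sum.cong)
      fix k assume k: "k \<in> {..<Suc ?m}"
      have "Am (drop (Suc k) us) = (\<Sum>ks\<in>interval_partitions (length (drop (Suc k) us)). prod_list (map Cp (chunks ks (drop (Suc k) us))))"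
        using less Cons by simp
      also have "length (drop (Suc k) us) = ?m - k" using Cons by simp
      finally show "(\<Sum>ks\<in>interval_partitions (?m - k). Cp (take (Suc k) us) * prod_list (map Cp (chunks ks (drop (Suc k) us))))
         = Cp (take (Suc k) us) * Am (drop (Suc k) us)"
        by (simp add: sum_distrib_left)
    qed simp
    also have "\<dots> = Am us" using Am_rec[of us] Cons by simp
    finally show ?thesis by simp
  qed
qed

end


lemma azero_chain: "op_prod (map (azero L) xs) [(1, [x])] = [(1, [foldr L xs x])]"
  by (induction xs) (auto simp: azero_def op_prod_def)

context cor_setup begin
lemma Lc_foldr: "ys \<noteq> [] \<Longrightarrow> Lc ys = foldr L (butlast ys) (last ys)"
  by (induction ys rule: Lc.induct) auto
end

theorem corollary3p5:
  fixes sc :: "complex \<Rightarrow> 'b::ring_1 \<Rightarrow> 'b" and st :: "'b \<Rightarrow> 'b"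
    and phi :: "'b \<Rightarrow> complex" and gamma :: "'b \<Rightarrow> 'b" and L :: "'b \<Rightarrow> 'b \<Rightarrow> 'b"
    and Bc :: "('b fvec \<Rightarrow> 'b fvec) list \<Rightarrow> complex"
    and us :: "'b list"
  assumes alg: "complex_star_algebra sc st"
    and phi_lin: "clinear_functional sc phi" and phi_star: "star_functional st phi"
    and gamma_lin: "clinear_map sc gamma" and gamma_star: "star_map st gamma"
    and L_lin: "cbilinear_map sc L" and L_star: "star_bimap st L"
    and phi_pos: "positive_functional st phi" and phi_faithful: "faithful_functional st phi"
    and cp: "completely_positive st (gpp sc phi gamma)"
    and phi_L: "\<forall>b u v. phi (st v * L b u) = phi (st (L (st b) v) * u)"
    and gamma_L: "\<forall>b u v. gamma (st v * L b u) = gamma (st (L (st b) v) * u)"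
    and gamma_eq: "\<forall>b. gamma b = sc (- phi b) 1"
    and Bc: "boolean_cumulants (vac_state sc st phi gamma) Bc"
    and n: "length us \<ge> 2"
  shows "Bc (map (Xop sc phi gamma L) us) =
         vac_state sc st phi gamma
           (aminus sc phi gamma (hd us) \<circ> op_prod (map (azero L) (butlast (tl us))) \<circ> aplus (last us))"
proof -
  have A: "\<forall>c x y. sc c (x * y) = sc c x * y \<and> sc c (x * y) = x * sc c y"
    using alg unfolding complex_star_algebra_def by blast
  interpret cor_setup sc phi gamma L
  proof unfold_locales
    show "sc c (x * y) = x * sc c y" for c x y using A by blast
  qed (use alg phi_lin L_lin gamma_eq in \<open>auto simp: complex_star_algebra_def clinear_functional_def
        cbilinear_map_def clinear_map_def\<close>)
  let ?X = "Xop sc phi gamma L"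
  let ?psi = "vac_state sc st phi gamma"
  have psi_eq: "?psi (op_prod (map ?X ws)) = Am ws" for ws
    using state_AB[of ws] by (simp add: vac_state_def fock_ip_vac)
  have main: "ws \<noteq> [] \<Longrightarrow> Bc (map ?X ws) = Cp ws" for ws
  proof (induction "length ws" arbitrary: ws rule: less_induct)
    case less
    let ?n = "length ws"
    let ?I = "interval_partitions ?n"
    have fin: "finite ?I" by (rule finite_IP)
    have mem: "[?n] \<in> ?I" using less.prems by (auto simp: interval_partitions_def)
    have eq: "prod_list (map Bc (chunks ks (map ?X ws))) = prod_list (map Cp (chunks ks ws))"
      if ks: "ks \<in> ?I - {[?n]}" for ks
    proof -
      have sl: "sum_list ks = length ws" using ks by (auto simp: interval_partitions_def)
      have "map Bc (chunks ks (map ?X ws)) = map (\<lambda>c. Bc (map ?X c)) (chunks ks ws)"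
        by (simp add: chunks_map)
      also have "\<dots> = map Cp (chunks ks ws)"
      proof (rule map_cong[OF refl])
        fix c assume c: "c \<in> set (chunks ks ws)"
        have "length c \<in> set ks"
          using c chunks_len[OF sl] by (metis image_eqI list.set_map)
        then have "0 < length c \<and> length c < ?n" using IP_lt ks by blast
        then show "Bc (map ?X c) = Cp c" using less by auto
      qed
      finally show ?thesis by simp
    qed
    have "Am ws = (\<Sum>ks\<in>?I. prod_list (map Bc (chunks ks (map ?X ws))))"
      using Bc less.prems psi_eq[of ws] by (simp add: boolean_cumulants_def)
    also have "\<dots> = Bc (map ?X ws) + (\<Sum>ks\<in>?I - {[?n]}. prod_list (map Bc (chunks ks (map ?X ws))))"
      using sum.remove[OF fin mem, of "\<lambda>ks. prod_list (map Bc (chunks ks (map ?X ws)))"] by simp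
    also have "(\<Sum>ks\<in>?I - {[?n]}. prod_list (map Bc (chunks ks (map ?X ws)))) =
        (\<Sum>ks\<in>?I - {[?n]}. prod_list (map Cp (chunks ks ws)))"
      using eq by (rule sum.cong[OF refl])
    finally have a: "Am ws = Bc (map ?X ws) + (\<Sum>ks\<in>?I - {[?n]}. prod_list (map Cp (chunks ks ws)))" .
    have b: "Am ws = Cp ws + (\<Sum>ks\<in>?I - {[?n]}. prod_list (map Cp (chunks ks ws)))"
      using moments[of ws] sum.remove[OF fin mem, of "\<lambda>ks. prod_list (map Cp (chunks ks ws))"] by simp
    from a b show ?case by simp
  qed
  obtain u v r where us: "us = u # v # r" using n
    by (metis One_nat_def Suc_1 le_antisym length_Cons list.exhaust list.size(3) nat.distinct(1) not_less_eq_eq zero_le)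
  have "vac_state sc st phi gamma
           (aminus sc phi gamma (hd us) \<circ> op_prod (map (azero L) (butlast (tl us))) \<circ> aplus (last us))
      = phi (u * Lc (v # r))"
    using us by (simp add: vac_state_def fock_ip_def aplus_def vac_def azero_chain Lc_foldr aminus_def)
  then show ?thesis using main[of us] us by simp
qed

end
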